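(* Let $n$ be an integer and let $V$ be a finite dimensional graded vector space concentrated in degrees $\geq2$. Let $\gamma\in\mathrm{GC}_{V,n}$ be a graph of loop order $g$ with $D$ decorations in $V^*$. Then the cohomological degree of $\gamma$ satisfies \[|\gamma|\leq-(n-3)(g-1)-D+1.\] In particular, if $n\geq4$ and $g\geq1$ then $|\gamma|\leq0$.
   Context: $\mathrm{GC}_{V,n}$ is spanned by connected graphs without hairs, with $v\ge1$ vertices and $e$ edges (loop order $g=e-v+1$), each vertex carrying a (possibly empty) monomial of decorations from $V^*$ (an element of $(V^k)^*$ having degree $-k$), such that every vertex is at least trivalent where each decoration at it counts $+1$ to its valence. The cohomological degree of such a graph in $\mathrm{GC}_{V,n}$ is $|\gamma|=nv-(n-1)e+(\text{total degree of the decorations})+1$. *)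

theory Defs
  imports Main "HOL-Library.Multiset"
begin

text \<open>A finite dimensional graded vector space V is recorded by its graded dimension
  dimV k = dim V^k.  A decoration from V^* that is an element of (V^k)^* has degree -k,
  so a decoration is recorded by the integer k (with V^k nonzero).\<close>

definition fin_graded_dim :: "(int \<Rightarrow> nat) \<Rightarrow> bool" where
  "fin_graded_dim dimV \<longleftrightarrow> finite {k. dimV k \<noteq> 0}"

definition concentrated_ge2 :: "(int \<Rightarrow> nat) \<Rightarrow> bool" where
  "concentrated_ge2 dimV \<longleftrightarrow> (\<forall>k. k < 2 \<longrightarrow> dimV k = 0)"

text \<open>A decorated graph: vertices 0..<v, a multiset E of edges (multigraph, loops allowed,
  each edge given by its two endpoints), and at each vertex i a multiset dec i of
  decoration degrees k (each decoration lies in (V^k)^*).\<close>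

definition edge_rel :: "(nat \<times> nat) multiset \<Rightarrow> (nat \<times> nat) set" where
  "edge_rel E = {(a,b). (a,b) \<in># E \<or> (b,a) \<in># E}"

definition valence :: "(nat \<times> nat) multiset \<Rightarrow> (nat \<Rightarrow> int multiset) \<Rightarrow> nat \<Rightarrow> nat" where
  "valence E dec i = size (filter_mset (\<lambda>(a,b). a = i) E)
                    + size (filter_mset (\<lambda>(a,b). b = i) E) + size (dec i)"

definition is_GC_graph ::
  "(int \<Rightarrow> nat) \<Rightarrow> nat \<Rightarrow> (nat \<times> nat) multiset \<Rightarrow> (nat \<Rightarrow> int multiset) \<Rightarrow> bool" where
  "is_GC_graph dimV v E dec \<longleftrightarrow>
     v \<ge> 1
   \<and> (\<forall>(a,b) \<in> set_mset E. a < v \<and> b < v)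
   \<and> (\<forall>i < v. (0, i) \<in> (edge_rel E)\<^sup>*)
   \<and> (\<forall>i. i \<ge> v \<longrightarrow> dec i = {#})
   \<and> (\<forall>i < v. \<forall>k \<in># dec i. dimV k \<noteq> 0)
   \<and> (\<forall>i < v. valence E dec i \<ge> 3)"

definition loop_order :: "nat \<Rightarrow> (nat \<times> nat) multiset \<Rightarrow> int" where
  "loop_order v E = int (size E) - int v + 1"

definition num_decorations :: "nat \<Rightarrow> (nat \<Rightarrow> int multiset) \<Rightarrow> nat" where
  "num_decorations v dec = (\<Sum>i<v. size (dec i))"

definition deco_degree :: "nat \<Rightarrow> (nat \<Rightarrow> int multiset) \<Rightarrow> int" where
  "deco_degree v dec = (\<Sum>i<v. \<Sum>k\<in>#dec i. - k)"

definition GC_degree :: "int \<Rightarrow> nat \<Rightarrow> (nat \<times> nat) multiset \<Rightarrow> (nat \<Rightarrow> int multiset) \<Rightarrow> int" where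
  "GC_degree n v E dec = n * int v - (n - 1) * int (size E) + deco_degree v dec + 1"

end

theory Submission
  imports Defs
begin

lemma cnt_fst:
  "(\<forall>(a,b) \<in> set_mset (E::(nat\<times>nat) multiset). a < (v::nat)) \<Longrightarrow>
   (\<Sum>i<v. size (filter_mset (\<lambda>(a,b). a = i) E)) = size E"
proof (induction E)
  case empty then show ?case by simp
next
  case (add x E)
  obtain a b where x: "x = (a,b)" by fastforce
  have av: "a < v" using add.prems x by auto
  have "(\<Sum>i<v. size (filter_mset (\<lambda>(a,b). a = i) (add_mset x E)))
      = (\<Sum>i<v. (if i = a then 1 else 0) + size (filter_mset (\<lambda>(a,b). a = i) E))"
    by (rule sum.cong) (auto simp: x)
  also have "\<dots> = (\<Sum>i<v. (if i = a then 1 else 0::nat)) + (\<Sum>i<v. size (filter_mset (\<lambda>(a,b). a = i) E))"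
    by (rule sum.distrib)
  also have "(\<Sum>i<v. (if i = a then 1 else 0::nat)) = 1" using av by (subst sum.delta) (simp_all add: finite_lessThan)
  also have "\<dots> + (\<Sum>i<v. size (filter_mset (\<lambda>(a,b). a = i) E)) = 1 + size E" using add by auto
  finally show ?case by simp
qed

lemma cnt_snd:
  "(\<forall>(a,b) \<in> set_mset (E::(nat\<times>nat) multiset). b < (v::nat)) \<Longrightarrow>
   (\<Sum>i<v. size (filter_mset (\<lambda>(a,b). b = i) E)) = size E"
proof (induction E)
  case empty then show ?case by simp
next
  case (add x E)
  obtain a b where x: "x = (a,b)" by fastforce
  have av: "b < v" using add.prems x by auto
  have "(\<Sum>i<v. size (filter_mset (\<lambda>(a,b). b = i) (add_mset x E)))
      = (\<Sum>i<v. (if i = b then 1 else 0) + size (filter_mset (\<lambda>(a,b). b = i) E))"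
    by (rule sum.cong) (auto simp: x)
  also have "\<dots> = (\<Sum>i<v. (if i = b then 1 else 0::nat)) + (\<Sum>i<v. size (filter_mset (\<lambda>(a,b). b = i) E))"
    by (rule sum.distrib)
  also have "(\<Sum>i<v. (if i = b then 1 else 0::nat)) = 1" using av by (subst sum.delta) (simp_all add: finite_lessThan)
  also have "\<dots> + (\<Sum>i<v. size (filter_mset (\<lambda>(a,b). b = i) E)) = 1 + size E" using add by auto
  finally show ?case by simp
qed

lemma deco_bound:
  "(\<forall>k\<in>#M. (k::int) \<ge> 2) \<Longrightarrow> (\<Sum>k\<in>#M. - k) \<le> - 2 * int (size M)"
  by (induction M) auto

theorem lemma13p5:
  fixes n :: int and dimV :: "int \<Rightarrow> nat" and v :: nat
    and E :: "(nat \<times> nat) multiset" and dec :: "nat \<Rightarrow> int multiset"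
  assumes "fin_graded_dim dimV" and "concentrated_ge2 dimV"
    and "is_GC_graph dimV v E dec"
  shows "GC_degree n v E dec
           \<le> - (n - 3) * (loop_order v E - 1) - int (num_decorations v dec) + 1
         \<and> (n \<ge> 4 \<and> loop_order v E \<ge> 1 \<longrightarrow> GC_degree n v E dec \<le> 0)"
proof -
  note G = assms(3)[unfolded is_GC_graph_def]
  have e1: "\<forall>(a,b) \<in> set_mset E. a < v" and e2: "\<forall>(a,b) \<in> set_mset E. b < v"
    using G by auto
  define D where "D = int (num_decorations v dec)"
  define S where "S = deco_degree v dec"
  have val: "(\<Sum>i<v. int (valence E dec i)) = 2 * int (size E) + D"
  proof -
    have "(\<Sum>i<v. valence E dec i) = size E + size E + num_decorations v dec"
      unfolding valence_def num_decorations_def sum.distrib cnt_fst[OF e1] cnt_snd[OF e2] ..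
    then show ?thesis unfolding D_def by (metis of_nat_add of_nat_sum mult_2)
  qed
  have "(\<Sum>i<v. int (valence E dec i)) \<ge> (\<Sum>i<v. 3)"
    by (rule sum_mono) (use G in auto)
  then have V: "2 * int (size E) + D \<ge> 3 * int v" using val by simp
  have "S \<le> (\<Sum>i<v. - 2 * int (size (dec i)))"
    unfolding S_def deco_degree_def
  proof (rule sum_mono)
    fix i assume "i \<in> {..<v}"
    then have "\<forall>k\<in>#dec i. k \<ge> 2" using G assms(2) unfolding concentrated_ge2_def
      by (metis lessThan_iff not_le)
    then show "(\<Sum>k\<in>#dec i. - k) \<le> - 2 * int (size (dec i))" by (rule deco_bound)
  qed
  also have "\<dots> = - 2 * D" unfolding D_def num_decorations_def
    by (simp add: sum_distrib_left)
  finally have SD: "S \<le> - 2 * D" .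
  have v1: "v \<ge> 1" using G by auto
  have main: "GC_degree n v E dec
           \<le> - (n - 3) * (loop_order v E - 1) - D + 1 - (2 * int (size E) + D - 3 * int v)"
    using SD unfolding GC_degree_def loop_order_def S_def[symmetric]
    by (simp add: algebra_simps)
  show ?thesis
  proof
    show "GC_degree n v E dec \<le> - (n - 3) * (loop_order v E - 1) - int (num_decorations v dec) + 1"
      using main V D_def by linarith
    show "n \<ge> 4 \<and> loop_order v E \<ge> 1 \<longrightarrow> GC_degree n v E dec \<le> 0"
    proof
      assume h: "n \<ge> 4 \<and> loop_order v E \<ge> 1"
      show "GC_degree n v E dec \<le> 0"
      proof (cases "loop_order v E = 1")
        case True
        then have "int (size E) = int v" unfolding loop_order_def by simp
        then have "D \<ge> 1" using V v1 by linarith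
        then show ?thesis using main V True by simp
      next
        case False
        then have "loop_order v E - 1 \<ge> 1" using h by simp
        moreover have "n - 3 \<ge> 1" using h by simp
        ultimately have "(n - 3) * (loop_order v E - 1) \<ge> 1"
          using mult_mono[of 1 "n-3" 1 "loop_order v E - 1"] by simp
        then show ?thesis using main V D_def by linarith
      qed
    qed
  qed
qed

end
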